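(* Let $(A_n)_{n\ge1}$ be a sequence of matrices with strictly positive entries (of arbitrary sizes, each dimension at least $2$) such that all products $P_n:=A_n A_{n-1}\cdots A_1$ are defined. Let $\alpha_n\ge1$ satisfy $R(A_n)\le\alpha_n$ for all $n$, put $p_n=\sqrt{\alpha_n}$, and define $q_1=p_1$, $q_{n+1}=\Psi(p_{n+1},q_n)$ where $\Psi(p,q)=\frac{1+pq}{p+q}$. Then $\sqrt{R(P_n)}\le q_n$, i.e. $R(P_n)\le q_n^2$, for every $n\ge1$.
   Context: For a matrix $A=(a_{ik})$ of size $d_1\times d_2$ with strictly positive entries, its distortion is $R(A)=\max_{1\le i,j\le d_1,\ 1\le k,\ell\le d_2}\frac{a_{ik}a_{j\ell}}{a_{i\ell}a_{jk}}$. *)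

theory Defs
  imports "Jordan_Normal_Form.Matrix"
begin

definition positive_mat :: "real mat \<Rightarrow> bool" where
  "positive_mat A \<longleftrightarrow> (\<forall>i<dim_row A. \<forall>k<dim_col A. A $$ (i,k) > 0)"

definition distortion :: "real mat \<Rightarrow> real" where
  "distortion A = Max {A $$ (i,k) * A $$ (j,l) / (A $$ (i,l) * A $$ (j,k)) | i j k l.
      i < dim_row A \<and> j < dim_row A \<and> k < dim_col A \<and> l < dim_col A}"

definition Psi :: "real \<Rightarrow> real \<Rightarrow> real" where
  "Psi p q = (1 + p * q) / (p + q)"

text \<open>Products P_n = A_n A_(n-1) ... A_1 (index 0 unused; P 0 = A 1 by convention of prod_seq below
  only matters for n \<ge> 1).\<close>
fun prod_seq :: "(nat \<Rightarrow> real mat) \<Rightarrow> nat \<Rightarrow> real mat" where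
  "prod_seq A 0 = A 1"
| "prod_seq A (Suc 0) = A 1"
| "prod_seq A (Suc (Suc n)) = A (Suc (Suc n)) * prod_seq A (Suc n)"

text \<open>q_1 = p_1, q_(n+1) = Psi(p_(n+1), q_n); q 0 is an unused dummy.\<close>
fun qseq :: "(nat \<Rightarrow> real) \<Rightarrow> nat \<Rightarrow> real" where
  "qseq p 0 = p 1"
| "qseq p (Suc 0) = p 1"
| "qseq p (Suc (Suc n)) = Psi (p (Suc (Suc n))) (qseq p (Suc n))"

end

theory Submission
  imports Defs
begin

lemma key_ident:
  fixes p q S :: real
  shows "(q^2-1+(p^2-1)*(S-1))*((1+p*q)^2*S - q^2*(p+q)^2) + (p+q)^2*(q^2-1)*(q^2-S)
       = (p^2-1)*((1+p*q)*S - q*(p+q))^2"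
  by (simp add: power2_eq_square algebra_simps)

lemma case1:
  fixes p q T S :: real
  assumes p: "p \<ge> 1" and q: "q \<ge> 1" and T1: "1 \<le> T" and S1: "1 \<le> S" and Sq: "S \<le> q^2"
    and reg: "(q^2-1)*(T-1) \<le> (p^2-1)*(S-1)"
  shows "(p+q)^2*(q^2*T+S-q^2) \<le> (1+p*q)^2*T*S"
proof -
  define c where "c = (1+p*q)^2*S - (p+q)^2*q^2"
  have G: "(1+p*q)^2*T*S - (p+q)^2*(q^2*T+S-q^2) = T*c - (p+q)^2*(S-q^2)"
    unfolding c_def by (simp add: algebra_simps)
  show ?thesis
  proof (cases "c \<ge> 0")
    case True
    have "T*c \<ge> 1*c" using T1 True by (intro mult_right_mono) auto
    moreover have "c - (p+q)^2*(S-q^2) = S*((1+p*q)^2-(p+q)^2)"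
      unfolding c_def by (simp add: algebra_simps)
    moreover have "(1+p*q)^2-(p+q)^2 = (p^2-1)*(q^2-1)"
      by (simp add: power2_eq_square algebra_simps)
    moreover have "p^2 \<ge> 1" "q^2 \<ge> 1" using p q by (simp_all add: one_le_power)
    ultimately have "T*c - (p+q)^2*(S-q^2) \<ge> 0" using S1
      by (smt (verit) mult_nonneg_nonneg)
    with G show ?thesis by linarith
  next
    case False
    have "q \<noteq> 1"
    proof
      assume "q = 1"
      hence "S = 1" using S1 Sq by simp
      hence "c = 0" using `q = 1` unfolding c_def by (simp add: power2_eq_square algebra_simps)
      with False show False by simp
    qed
    hence "q > 1" using q by simp
    hence "q^2 > 1" by (simp add: one_less_power)
    have "(q^2-1)*T \<le> q^2-1+(p^2-1)*(S-1)" using reg by (simp add: algebra_simps)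
    hence "((q^2-1)*T)*c \<ge> (q^2-1+(p^2-1)*(S-1))*c" using False
      by (intro mult_right_mono_neg) auto
    moreover have "(p^2-1)*((1+p*q)*S - q*(p+q))^2 \<ge> 0"
      using p by (simp add: one_le_power)
    ultimately have "(q^2-1)*(T*c - (p+q)^2*(S-q^2)) \<ge> 0"
    proof -
      assume a1: "((q^2-1)*T)*c \<ge> (q^2-1+(p^2-1)*(S-1))*c"
        and a2: "(p^2-1)*((1+p*q)*S - q*(p+q))^2 \<ge> 0"
      have e: "(q^2-1)*(T*c - (p+q)^2*(S-q^2)) = ((q^2-1)*T)*c + (p+q)^2*(q^2-1)*(q^2-S)"
        by (simp add: algebra_simps)
      have "(q^2-1+(p^2-1)*(S-1))*c + (p+q)^2*(q^2-1)*(q^2-S) = (p^2-1)*((1+p*q)*S - q*(p+q))^2"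
        unfolding c_def by (simp add: power2_eq_square algebra_simps)
      with a1 a2 e show ?thesis by linarith
    qed
    hence "T*c - (p+q)^2*(S-q^2) \<ge> 0" using `q^2>1`
      by (simp add: zero_le_mult_iff)
    with G show ?thesis by linarith
  qed
qed

lemma two_d:
  fixes p q T S M :: real
  assumes p: "p \<ge> 1" and q: "q \<ge> 1" and T1: "1 \<le> T" and Tp: "T \<le> p^2"
    and S1: "1 \<le> S" and Sq: "S \<le> q^2"
    and M1: "M \<le> q^2*T+S-q^2" and M2: "M \<le> p^2*S+T-p^2"
  shows "(p+q)^2*M \<le> (1+p*q)^2*T*S"
proof (cases "(q^2-1)*(T-1) \<le> (p^2-1)*(S-1)")
  case True
  from case1[OF p q T1 S1 Sq True] have "(p+q)^2*(q^2*T+S-q^2) \<le> (1+p*q)^2*T*S" .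
  moreover have "(p+q)^2*M \<le> (p+q)^2*(q^2*T+S-q^2)" using M1 by (simp add: mult_left_mono)
  ultimately show ?thesis by linarith
next
  case False
  hence F: "(p^2-1)*(S-1) \<le> (q^2-1)*(T-1)" by simp
  from case1[OF q p S1 T1 Tp F] have "(q+p)^2*(p^2*S+T-p^2) \<le> (1+q*p)^2*S*T" .
  moreover have "(p+q)^2*M \<le> (p+q)^2*(p^2*S+T-p^2)" using M2 by (simp add: mult_left_mono)
  ultimately show ?thesis by (simp add: algebra_simps)
qed

lemma sum_ineq:
  fixes p q :: real and w t s :: "nat \<Rightarrow> real"
  assumes p: "p \<ge> 1" and q: "q \<ge> 1" and fin: "finite I" and ne: "I \<noteq> {}"
    and w: "\<And>m. m \<in> I \<Longrightarrow> w m > 0"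
    and t: "\<And>m. m \<in> I \<Longrightarrow> 1 \<le> t m \<and> t m \<le> p^2"
    and s: "\<And>m. m \<in> I \<Longrightarrow> 1 \<le> s m \<and> s m \<le> q^2"
  shows "(p+q)^2 * ((\<Sum>m\<in>I. w m) * (\<Sum>m\<in>I. w m * t m * s m))
     \<le> (1+p*q)^2 * ((\<Sum>m\<in>I. w m * t m) * (\<Sum>m\<in>I. w m * s m))"
proof -
  define W where "W = (\<Sum>m\<in>I. w m)"
  define T where "T = (\<Sum>m\<in>I. w m * t m)"
  define S where "S = (\<Sum>m\<in>I. w m * s m)"
  define M where "M = (\<Sum>m\<in>I. w m * t m * s m)"
  have W0: "W > 0" unfolding W_def using fin ne w by (intro sum_pos) auto
  have h1: "(\<Sum>m\<in>I. w m * (t m - 1) * (q^2 - s m)) \<ge> 0"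
    using w t s by (intro sum_nonneg) (simp add: mult_nonneg_nonneg less_imp_le)
  have h1e: "(\<Sum>m\<in>I. w m * (t m - 1) * (q^2 - s m)) = q^2*T - M - q^2*W + S"
    unfolding T_def M_def W_def S_def
    by (simp add: algebra_simps sum.distrib sum_subtractf sum_distrib_left sum_distrib_right)
  have h2: "(\<Sum>m\<in>I. w m * (s m - 1) * (p^2 - t m)) \<ge> 0"
    using w t s by (intro sum_nonneg) (simp add: mult_nonneg_nonneg less_imp_le)
  have h2e: "(\<Sum>m\<in>I. w m * (s m - 1) * (p^2 - t m)) = p^2*S - M - p^2*W + T"
    unfolding T_def M_def W_def S_def
    by (simp add: algebra_simps sum.distrib sum_subtractf sum_distrib_left sum_distrib_right)
  have T1: "W \<le> T" unfolding W_def T_def using w t by (intro sum_mono) simp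
  have T2: "T \<le> p^2 * W" unfolding W_def T_def sum_distrib_left using w t
    by (intro sum_mono) (simp add: mult.commute)
  have S1: "W \<le> S" unfolding W_def S_def using w s by (intro sum_mono) simp
  have S2: "S \<le> q^2 * W" unfolding W_def S_def sum_distrib_left using w s
    by (intro sum_mono) (simp add: mult.commute)
  have "(p+q)^2*(M/W) \<le> (1+p*q)^2*(T/W)*(S/W)"
  proof (rule two_d[OF p q])
    show "1 \<le> T/W" "T/W \<le> p^2" "1 \<le> S/W" "S/W \<le> q^2"
      using T1 T2 S1 S2 W0 by (simp_all add: field_simps)
    show "M/W \<le> q^2*(T/W)+S/W-q^2" "M/W \<le> p^2*(S/W)+T/W-p^2"
      using h1 h1e h2 h2e W0 by (simp_all add: field_simps)
  qed
  hence "(p+q)^2*(M/W) * W^2 \<le> (1+p*q)^2*(T/W)*(S/W) * W^2"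
    using W0 by (intro mult_right_mono) auto
  moreover have "(p+q)^2*(M/W) * W^2 = (p+q)^2*(W*M)" using W0
    by (simp add: power2_eq_square)
  moreover have "(1+p*q)^2*(T/W)*(S/W) * W^2 = (1+p*q)^2*(T*S)" using W0
    by (simp add: power2_eq_square)
  ultimately have "(p+q)^2*(W*M) \<le> (1+p*q)^2*(T*S)" by simp
  thus ?thesis unfolding W_def T_def S_def M_def .
qed

lemma vec_ineq:
  fixes p q :: real and x y u v :: "nat \<Rightarrow> real"
  assumes p: "p \<ge> 1" and q: "q \<ge> 1" and r: "r > 0"
    and pos: "\<And>m. m < r \<Longrightarrow> x m > 0 \<and> y m > 0 \<and> u m > 0 \<and> v m > 0"
    and ratA: "\<And>m n. m < r \<Longrightarrow> n < r \<Longrightarrow> x n * y m \<le> p^2 * (x m * y n)"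
    and ratB: "\<And>m n. m < r \<Longrightarrow> n < r \<Longrightarrow> u n * v m \<le> q^2 * (u m * v n)"
  shows "(p+q)^2 * ((\<Sum>m<r. x m * u m) * (\<Sum>m<r. y m * v m))
     \<le> (1+p*q)^2 * ((\<Sum>m<r. x m * v m) * (\<Sum>m<r. y m * u m))"
proof -
  define I where "I = {..<r}"
  have fin: "finite I" and ne: "I \<noteq> {}" using r unfolding I_def by auto
  define t where "t m = y m / x m" for m
  define s where "s m = v m / u m" for m
  obtain m0 where m0: "m0 \<in> I" "t m0 = Min (t ` I)"
  proof -
    have "Min (t ` I) \<in> t ` I" using fin ne by (intro Min_in) auto
    thus ?thesis using that by (metis imageE)
  qed
  obtain n0 where n0: "n0 \<in> I" "s n0 = Min (s ` I)"
  proof -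
    have "Min (s ` I) \<in> s ` I" using fin ne by (intro Min_in) auto
    thus ?thesis using that by (metis imageE)
  qed
  define t0 where "t0 = t m0"
  define s0 where "s0 = s n0"
  have t0p: "t0 > 0" using pos m0(1) unfolding t0_def t_def I_def by auto
  have s0p: "s0 > 0" using pos n0(1) unfolding s0_def s_def I_def by auto
  define w where "w m = x m * u m" for m
  define t' where "t' m = t m / t0" for m
  define s' where "s' m = s m / s0" for m
  have tb: "1 \<le> t' m \<and> t' m \<le> p^2" if "m \<in> I" for m
  proof
    have "t0 \<le> t m" unfolding t0_def m0(2) using fin that by simp
    thus "1 \<le> t' m" unfolding t'_def using t0p by simp
    have "x m0 * y m \<le> p^2 * (x m * y m0)" using ratA that m0(1) unfolding I_def by auto
    hence "t m \<le> p^2 * t0" unfolding t_def t0_def using pos that m0(1) unfolding I_def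
      by (simp add: field_simps)
    thus "t' m \<le> p^2" unfolding t'_def using t0p by (simp add: field_simps)
  qed
  have sb: "1 \<le> s' m \<and> s' m \<le> q^2" if "m \<in> I" for m
  proof
    have "s0 \<le> s m" unfolding s0_def n0(2) using fin that by simp
    thus "1 \<le> s' m" unfolding s'_def using s0p by simp
    have "u n0 * v m \<le> q^2 * (u m * v n0)" using ratB that n0(1) unfolding I_def by auto
    hence "s m \<le> q^2 * s0" unfolding s_def s0_def using pos that n0(1) unfolding I_def
      by (simp add: field_simps)
    thus "s' m \<le> q^2" unfolding s'_def using s0p by (simp add: field_simps)
  qed
  have wp: "w m > 0" if "m \<in> I" for m using pos that unfolding w_def I_def by auto
  have main: "(p+q)^2 * ((\<Sum>m\<in>I. w m) * (\<Sum>m\<in>I. w m * t' m * s' m))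
     \<le> (1+p*q)^2 * ((\<Sum>m\<in>I. w m * t' m) * (\<Sum>m\<in>I. w m * s' m))"
    using sum_ineq[OF p q fin ne, of w t' s'] wp tb sb by blast
  have nzx: "x m \<noteq> 0" and nzu: "u m \<noteq> 0" if "m \<in> I" for m
    using pos[of m] that unfolding I_def by auto
  have e1: "(\<Sum>m\<in>I. w m * t' m * s' m) = (\<Sum>m\<in>I. y m * v m) / (t0*s0)"
    unfolding sum_divide_distrib
    by (rule sum.cong[OF refl]) (use t0p s0p in \<open>simp add: w_def t'_def s'_def t_def s_def nzx nzu\<close>)
  have e2: "(\<Sum>m\<in>I. w m * t' m) = (\<Sum>m\<in>I. y m * u m) / t0"
    unfolding sum_divide_distrib
    by (rule sum.cong[OF refl]) (use t0p s0p in \<open>simp add: w_def t'_def t_def nzx nzu\<close>)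
  have e3: "(\<Sum>m\<in>I. w m * s' m) = (\<Sum>m\<in>I. x m * v m) / s0"
    unfolding sum_divide_distrib
    by (rule sum.cong[OF refl]) (use t0p s0p in \<open>simp add: w_def s'_def s_def nzx nzu\<close>)
  have "(p+q)^2 * ((\<Sum>m\<in>I. x m * u m) * (\<Sum>m\<in>I. y m * v m)) / (t0*s0)
     \<le> (1+p*q)^2 * ((\<Sum>m\<in>I. x m * v m) * (\<Sum>m\<in>I. y m * u m)) / (t0*s0)"
    using main unfolding e1 e2 e3 by (simp add: w_def mult.commute mult.left_commute)
  hence "(p+q)^2 * ((\<Sum>m\<in>I. x m * u m) * (\<Sum>m\<in>I. y m * v m))
     \<le> (1+p*q)^2 * ((\<Sum>m\<in>I. x m * v m) * (\<Sum>m\<in>I. y m * u m))"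
    using t0p s0p by (simp add: divide_right_mono_neg divide_le_cancel)
  thus ?thesis unfolding I_def .
qed


lemma finite_dist_set:
  "finite {f i j k l | i j k l. i < (r::nat) \<and> j < r \<and> k < (c::nat) \<and> l < c}"
proof (rule finite_subset[of _ "(\<lambda>(i,j,k,l). f i j k l) ` ({..<r} \<times> {..<r} \<times> {..<c} \<times> {..<c})"])
  show "{f i j k l | i j k l. i < r \<and> j < r \<and> k < c \<and> l < c}
    \<subseteq> (\<lambda>(i,j,k,l). f i j k l) ` ({..<r} \<times> {..<r} \<times> {..<c} \<times> {..<c})"
    by force
qed auto

lemma dist_ge:
  assumes pos: "positive_mat A" and ij: "i < dim_row A" "j < dim_row A"
    and kl: "k < dim_col A" "l < dim_col A"
  shows "A $$ (i,k) * A $$ (j,l) \<le> distortion A * (A $$ (i,l) * A $$ (j,k))"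
proof -
  have "A $$ (i,k) * A $$ (j,l) / (A $$ (i,l) * A $$ (j,k)) \<le> distortion A"
    unfolding distortion_def
    by (rule Max_ge[OF finite_dist_set]) (use ij kl in blast)
  moreover have "A $$ (i,l) * A $$ (j,k) > 0" using pos ij kl unfolding positive_mat_def by simp
  ultimately show ?thesis by (simp add: pos_divide_le_eq)
qed

lemma dist_le:
  assumes r: "dim_row A > 0" and c: "dim_col A > 0"
    and H: "\<And>i j k l. i < dim_row A \<Longrightarrow> j < dim_row A \<Longrightarrow> k < dim_col A \<Longrightarrow> l < dim_col A
       \<Longrightarrow> A $$ (i,k) * A $$ (j,l) / (A $$ (i,l) * A $$ (j,k)) \<le> C"
  shows "distortion A \<le> C"
  unfolding distortion_def
proof (subst Max_le_iff[OF finite_dist_set])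
  show "{A $$ (i,k) * A $$ (j,l) / (A $$ (i,l) * A $$ (j,k)) | i j k l.
      i < dim_row A \<and> j < dim_row A \<and> k < dim_col A \<and> l < dim_col A} \<noteq> {}"
    using r c by blast
  show "\<forall>a\<in>{A $$ (i,k) * A $$ (j,l) / (A $$ (i,l) * A $$ (j,k)) | i j k l.
      i < dim_row A \<and> j < dim_row A \<and> k < dim_col A \<and> l < dim_col A}. a \<le> C"
    using H by blast
qed

lemma mult_entry:
  fixes A B :: "real mat"
  assumes "dim_col A = dim_row B" "i < dim_row A" "k < dim_col B"
  shows "(A * B) $$ (i,k) = (\<Sum>m<dim_row B. A $$ (i,m) * B $$ (m,k))"
  using assms by (simp add: scalar_prod_def atLeast0LessThan)

lemma prod_step:
  fixes A B :: "real mat" and p q :: real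
  assumes pA: "positive_mat A" and pB: "positive_mat B" and ch: "dim_col A = dim_row B"
    and dA: "dim_row A > 0" "dim_col A > 0" and dB: "dim_col B > 0"
    and p: "p \<ge> 1" and q: "q \<ge> 1"
    and RA: "distortion A \<le> p^2" and RB: "distortion B \<le> q^2"
  shows "positive_mat (A * B) \<and> distortion (A * B) \<le> (Psi p q)^2"
proof -
  let ?r = "dim_row B"
  have r: "?r > 0" using dA ch by simp
  have Apos: "\<And>i m. i < dim_row A \<Longrightarrow> m < ?r \<Longrightarrow> A $$ (i,m) > 0"
    using pA ch unfolding positive_mat_def by auto
  have Bpos: "\<And>m k. m < ?r \<Longrightarrow> k < dim_col B \<Longrightarrow> B $$ (m,k) > 0"
    using pB unfolding positive_mat_def by auto
  have ent: "\<And>i k. i < dim_row A \<Longrightarrow> k < dim_col B \<Longrightarrow>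
      (A * B) $$ (i,k) = (\<Sum>m<?r. A $$ (i,m) * B $$ (m,k))"
    using mult_entry[OF ch] by blast
  have entpos: "\<And>i k. i < dim_row A \<Longrightarrow> k < dim_col B \<Longrightarrow> (A * B) $$ (i,k) > 0"
  proof -
    fix i k assume ik: "i < dim_row A" "k < dim_col B"
    have "(\<Sum>m<?r. A $$ (i,m) * B $$ (m,k)) > 0"
      using r ik Apos Bpos by (intro sum_pos) auto
    thus "(A * B) $$ (i,k) > 0" using ent ik by simp
  qed
  have P1: "positive_mat (A * B)" unfolding positive_mat_def using entpos by simp
  have pq: "p + q > 0" using p q by simp
  have "distortion (A * B) \<le> (Psi p q)^2"
  proof (rule dist_le)
    show "dim_row (A * B) > 0" "dim_col (A * B) > 0" using dA dB by simp_all
    fix i j k l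
    assume ij: "i < dim_row (A * B)" "j < dim_row (A * B)"
      and kl: "k < dim_col (A * B)" "l < dim_col (A * B)"
    hence ij': "i < dim_row A" "j < dim_row A" and kl': "k < dim_col B" "l < dim_col B" by simp_all
    define x where "x m = A $$ (i,m)" for m
    define y where "y m = A $$ (j,m)" for m
    define u where "u m = B $$ (m,k)" for m
    define v where "v m = B $$ (m,l)" for m
    have posv: "\<And>m. m < ?r \<Longrightarrow> x m > 0 \<and> y m > 0 \<and> u m > 0 \<and> v m > 0"
      unfolding x_def y_def u_def v_def using Apos Bpos ij' kl' by auto
    have ratA: "x n * y m \<le> p^2 * (x m * y n)" if "m < ?r" "n < ?r" for m n
    proof -
      have "A $$ (j,m) * A $$ (i,n) \<le> distortion A * (A $$ (j,n) * A $$ (i,m))"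
        using dist_ge[OF pA ij'(2) ij'(1)] that ch by simp
      also have "\<dots> \<le> p^2 * (A $$ (j,n) * A $$ (i,m))"
        using RA Apos that ij' by (intro mult_right_mono) (auto intro: less_imp_le)
      finally show ?thesis unfolding x_def y_def by (simp add: mult.commute)
    qed
    have ratB: "u n * v m \<le> q^2 * (u m * v n)" if "m < ?r" "n < ?r" for m n
    proof -
      have "B $$ (n,k) * B $$ (m,l) \<le> distortion B * (B $$ (n,l) * B $$ (m,k))"
        using dist_ge[OF pB that(2) that(1) kl'] by simp
      also have "\<dots> \<le> q^2 * (B $$ (n,l) * B $$ (m,k))"
        using RB Bpos that kl' by (intro mult_right_mono) (auto intro: less_imp_le)
      finally show ?thesis unfolding u_def v_def by (simp add: mult.commute)
    qed
    have V: "(p+q)^2 * ((\<Sum>m<?r. x m * u m) * (\<Sum>m<?r. y m * v m))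
     \<le> (1+p*q)^2 * ((\<Sum>m<?r. x m * v m) * (\<Sum>m<?r. y m * u m))"
      by (rule vec_ineq[OF p q r posv ratA ratB])
    have e: "(A * B) $$ (i,k) = (\<Sum>m<?r. x m * u m)" "(A * B) $$ (j,l) = (\<Sum>m<?r. y m * v m)"
      "(A * B) $$ (i,l) = (\<Sum>m<?r. x m * v m)" "(A * B) $$ (j,k) = (\<Sum>m<?r. y m * u m)"
      using ent ij' kl' unfolding x_def y_def u_def v_def by auto
    have D: "(A * B) $$ (i,l) * (A * B) $$ (j,k) > 0" using entpos ij' kl' by simp
    have "(p+q)^2 * ((A * B) $$ (i,k) * (A * B) $$ (j,l))
        \<le> (1+p*q)^2 * ((A * B) $$ (i,l) * (A * B) $$ (j,k))" using V unfolding e .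
    hence "(A * B) $$ (i,k) * (A * B) $$ (j,l)
        \<le> (1+p*q)^2 / (p+q)^2 * ((A * B) $$ (i,l) * (A * B) $$ (j,k))"
      using pq by (simp add: field_simps)
    thus "(A * B) $$ (i,k) * (A * B) $$ (j,l) / ((A * B) $$ (i,l) * (A * B) $$ (j,k)) \<le> (Psi p q)^2"
      using D unfolding Psi_def by (simp add: pos_divide_le_eq power_divide)
  qed
  with P1 show ?thesis by simp
qed

lemma Psi_ge1:
  fixes p q :: real assumes "p \<ge> 1" "q \<ge> 1" shows "Psi p q \<ge> 1"
proof -
  have "(p-1)*(q-1) \<ge> 0" using assms by simp
  hence "p + q \<le> 1 + p*q" by (simp add: algebra_simps)
  thus ?thesis unfolding Psi_def using assms by simp
qed

theorem mainTheorem10: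
  fixes A :: "nat \<Rightarrow> real mat" and alpha :: "nat \<Rightarrow> real"
  assumes pos: "\<And>n. n \<ge> 1 \<Longrightarrow> positive_mat (A n)"
    and rows: "\<And>n. n \<ge> 1 \<Longrightarrow> dim_row (A n) \<ge> 2"
    and cols: "\<And>n. n \<ge> 1 \<Longrightarrow> dim_col (A n) \<ge> 2"
    and chain: "\<And>n. n \<ge> 1 \<Longrightarrow> dim_col (A (Suc n)) = dim_row (A n)"
    and alpha_ge: "\<And>n. n \<ge> 1 \<Longrightarrow> alpha n \<ge> 1"
    and R_le: "\<And>n. n \<ge> 1 \<Longrightarrow> distortion (A n) \<le> alpha n"
    and n: "n \<ge> 1"
  shows "sqrt (distortion (prod_seq A n)) \<le> qseq (\<lambda>k. sqrt (alpha k)) n"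

proof -
  define p where "p k = sqrt (alpha k)" for k
  have p1: "p k \<ge> 1" if "k \<ge> 1" for k unfolding p_def using alpha_ge[OF that] by simp
  have pR: "distortion (A k) \<le> (p k)^2" if "k \<ge> 1" for k
    unfolding p_def using alpha_ge[OF that] R_le[OF that] by simp
  have IH: "positive_mat (prod_seq A (Suc m)) \<and> dim_row (prod_seq A (Suc m)) = dim_row (A (Suc m))
    \<and> dim_col (prod_seq A (Suc m)) = dim_col (A 1)
    \<and> distortion (prod_seq A (Suc m)) \<le> (qseq p (Suc m))^2 \<and> qseq p (Suc m) \<ge> 1" for m
  proof (induction m)
    case 0
    show ?case using pos[of 1] pR[of 1] p1[of 1] by simp
  next
    case (Suc m)
    have e1: "prod_seq A (Suc (Suc m)) = A (Suc (Suc m)) * prod_seq A (Suc m)" by simp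
    have e2: "qseq p (Suc (Suc m)) = Psi (p (Suc (Suc m))) (qseq p (Suc m))" by simp
    have ch: "dim_col (A (Suc (Suc m))) = dim_row (prod_seq A (Suc m))"
      using chain[of "Suc m"] Suc.IH by simp
    have st: "positive_mat (A (Suc (Suc m)) * prod_seq A (Suc m)) \<and>
       distortion (A (Suc (Suc m)) * prod_seq A (Suc m)) \<le> (Psi (p (Suc (Suc m))) (qseq p (Suc m)))^2"
    proof (rule prod_step[OF pos ])
      show "positive_mat (prod_seq A (Suc m))" using Suc.IH by simp
      show "dim_col (A (Suc (Suc m))) = dim_row (prod_seq A (Suc m))" by (rule ch)
      show "0 < dim_row (A (Suc (Suc m)))" using rows[of "Suc (Suc m)"] by simp
      show "0 < dim_col (A (Suc (Suc m)))" using cols[of "Suc (Suc m)"] by simp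
      show "0 < dim_col (prod_seq A (Suc m))" using Suc.IH cols[of 1] by simp
      show "1 \<le> p (Suc (Suc m))" by (rule p1) simp
      show "1 \<le> qseq p (Suc m)" using Suc.IH by simp
      show "distortion (A (Suc (Suc m))) \<le> (p (Suc (Suc m)))\<^sup>2" by (rule pR) simp
      show "distortion (prod_seq A (Suc m)) \<le> (qseq p (Suc m))\<^sup>2" using Suc.IH by simp
    qed simp
    have "qseq p (Suc (Suc m)) \<ge> 1" unfolding e2
      using Psi_ge1[of "p (Suc (Suc m))" "qseq p (Suc m)"] p1[of "Suc (Suc m)"] Suc.IH by simp
    with st ch Suc.IH show ?case unfolding e1 e2 by simp
  qed
  obtain m where m: "n = Suc m" using n by (cases n) auto
  from IH[of m] have d: "distortion (prod_seq A n) \<le> (qseq p n)^2" and g: "qseq p n \<ge> 1"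
    unfolding m by auto
  have "sqrt (distortion (prod_seq A n)) \<le> sqrt ((qseq p n)^2)" using d by (rule real_sqrt_le_mono)
  also have "\<dots> = qseq p n" using g by simp
  finally show ?thesis unfolding p_def .
qed

end
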